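(* Let $p$ be even with $3 \le p \le \sqrt{n}$, and let $\ell$ be an integer with $p/2\le\ell$ and $\ell < n/p^2$. For $0\le m\le\ell$ let \[\mu_m = \sum_{s=0}^{\min(m,p/2)} (-1)^s\binom{m}{s}\binom{\ell-m}{p/2-s}\binom{n-\ell-m}{p/2-s}.\] Then for all $0 \le m\le \ell$, \[\frac{|\mu_m|}{\mu_0} \le \max\left\{\left(1-\frac{m}{\ell}\right)^{p/2},\ \frac{p}{n}\right\}.\]
   Context: The $\mu_m$ are the eigenvalues of the matrix $\mathbf{X}$ indexed by $\ell$-subsets of $[n]$ with $\mathbf{X}_{S,T}=\mathbf{1}_{|S\triangle T|=p}$; in particular $\mu_0 = \binom{\ell}{p/2}\binom{n-\ell}{p/2}$. Binomial coefficients $\binom{a}{b}$ are $0$ when $b<0$ or $b>a$. *)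

theory Defs
  imports Complex_Main
begin

definition mu :: "nat \<Rightarrow> nat \<Rightarrow> nat \<Rightarrow> nat \<Rightarrow> int" where
  "mu n p l m = (\<Sum>s=0..min m (p div 2).
      (-1)^s * int (m choose s) * int ((l - m) choose (p div 2 - s))
        * int ((n - l - m) choose (p div 2 - s)))"

end

theory Submission
  imports Defs
begin

lemma alt_bound:
  fixes a :: "nat \<Rightarrow> real"
  assumes "\<And>s. 0 \<le> a s"
  shows "(\<forall>s. i \<le> s \<longrightarrow> s < i + d \<longrightarrow> a (Suc s) \<le> a s) \<Longrightarrow>
     0 \<le> (-1)^i * (\<Sum>s=i..i+d. (-1)^s * a s) \<and> (-1)^i * (\<Sum>s=i..i+d. (-1)^s * a s) \<le> a i"
proof (induction d arbitrary: i)
  case 0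
  then show ?case using assms[of i] by (simp add: power_mult_distrib[symmetric])
next
  case (Suc d)
  have IH: "0 \<le> (-1)^(Suc i) * (\<Sum>s=Suc i..Suc i+d. (-1)^s * a s) \<and> (-1)^(Suc i) * (\<Sum>s=Suc i..Suc i+d. (-1)^s * a s) \<le> a (Suc i)"
    using Suc.prems by (intro Suc.IH) auto
  have dec: "a (Suc i) \<le> a i" using Suc.prems by auto
  have split: "(\<Sum>s=i..i+Suc d. (-1)^s * a s) = (-1)^i * a i + (\<Sum>s=Suc i..Suc i+d. (-1)^s * a s)"
    by (simp add: sum.atLeast_Suc_atMost)
  define T where "T = (\<Sum>s=Suc i..Suc i+d. (-1::real)^s * a s)"
  have e: "(-1::real)^i * (-1)^i = 1" by (simp add: power_mult_distrib[symmetric])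
  have "(-1::real)^i * (\<Sum>s=i..i+Suc d. (-1)^s * a s) = a i - (-1)^(Suc i) * T"
    unfolding split T_def[symmetric] by (simp add: algebra_simps e)
  then show ?case using IH dec unfolding T_def by linarith
qed

lemma alt_bound_abs:
  fixes a :: "nat \<Rightarrow> real"
  assumes "\<And>s. 0 \<le> a s" "i \<le> j" "\<And>s. i \<le> s \<Longrightarrow> s < j \<Longrightarrow> a (Suc s) \<le> a s"
  shows "\<bar>\<Sum>s=i..j. (-1)^s * a s\<bar> \<le> a i"
proof -
  obtain d where j: "j = i + d" using assms(2) le_Suc_ex by blast
  have h: "0 \<le> (-1)^i * (\<Sum>s=i..j. (-1)^s * a s) \<and> (-1)^i * (\<Sum>s=i..j. (-1)^s * a s) \<le> a i"
    unfolding j by (rule alt_bound[OF assms(1)]) (use assms(3) j in auto)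
  have "\<bar>(-1::real)^i * (\<Sum>s=i..j. (-1)^s * a s)\<bar> = \<bar>\<Sum>s=i..j. (-1)^s * a s\<bar>"
    by (simp add: abs_mult)
  then show ?thesis using h by linarith
qed

lemma choose_step: "(x choose Suc r) * Suc r = (x choose r) * (x - r)"
proof (cases x)
  case 0
  then show ?thesis by simp
next
  case (Suc y)
  have "(Suc y choose Suc r) * Suc r = Suc y * (y choose r)"
    using Suc_times_binomial[of r y] by (simp add: mult.commute)
  moreover have "(Suc y - r) * (Suc y choose r) = Suc y * (y choose r)"
    using binomial_absorb_comp[of "Suc y" r] by simp
  ultimately show ?thesis using Suc by (simp add: mult.commute)
qed

lemma choose_shift: "(x choose y) \<le> ((x + d) choose (y + d))"
proof (induction d)
  case 0 then show ?case by simp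
next
  case (Suc d)
  have "((x + d) choose (y + d)) \<le> (Suc (x + d) choose Suc (y + d))"
    by simp
  then show ?case using Suc by simp
qed

lemma choose_ratio:
  fixes a b k :: nat
  assumes "a \<le> b" "0 < b"
  shows "real (a choose k) \<le> (real a / real b)^k * real (b choose k)"
proof (cases "k \<le> a")
  case False
  then show ?thesis by (simp add: binomial_eq_0)
next
  case True
  have ra: "real (a choose k) = (\<Prod>i = 0..<k. (real a - real i) / real (k - i))"
    by (simp add: binomial_gbinomial gbinomial_altdef_of_nat)
  have rb: "real (b choose k) = (\<Prod>i = 0..<k. (real b - real i) / real (k - i))"
    by (simp add: binomial_gbinomial gbinomial_altdef_of_nat)
  have "(real a / real b)^k * real (b choose k) = (\<Prod>i = 0..<k. (real a / real b) * ((real b - real i) / real (k - i)))"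
    by (simp only: rb prod.distrib prod_constant card_atLeastLessThan diff_zero)
  moreover have "(\<Prod>i = 0..<k. (real a - real i) / real (k - i)) \<le> (\<Prod>i = 0..<k. (real a / real b) * ((real b - real i) / real (k - i)))"
  proof (rule prod_mono)
    fix i assume i: "i \<in> {0..<k}"
    have ai: "real i < real a" using i True by auto
    have m1: "real a * real i \<le> real b * real i" using assms(1) by (simp add: mult_right_mono)
    have key: "(real a - real i) * real b \<le> real a * (real b - real i)"
      using m1 unfolding left_diff_distrib right_diff_distrib by (simp add: mult.commute)
    have bpos: "0 < real b" using assms(2) by simp
    have le1: "(real a - real i) \<le> (real a / real b) * (real b - real i)"
      unfolding times_divide_eq_left using key bpos by (simp add: le_divide_eq)
    have kpos: "0 \<le> real (k - i)" by simp
    have g1: "0 \<le> (real a - real i) / real (k - i)" using ai kpos by simp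
    have g2: "(real a - real i) / real (k - i) \<le> ((real a / real b) * (real b - real i)) / real (k - i)"
      using le1 kpos by (rule divide_right_mono)
    show "0 \<le> (real a - real i) / real (k - i) \<and>
        (real a - real i) / real (k - i) \<le> (real a / real b) * ((real b - real i) / real (k - i))"
      using g1 g2 by simp
  qed
  ultimately show ?thesis using ra by simp
qed

theorem lemma2:
  fixes n p l m :: nat
  assumes "even p" and "3 \<le> p" and "real p \<le> sqrt (real n)"
    and "real p / 2 \<le> real l" and "real l < real n / (real p)^2"
    and "m \<le> l"
  shows "\<bar>real_of_int (mu n p l m)\<bar> / real_of_int (mu n p l 0)
           \<le> max ((1 - real m / real l) ^ (p div 2)) (real p / real n)"
proof -
  define k where "k = p div 2"
  have p2: "p = 2 * k" using assms(1) k_def by auto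
  have k2: "2 \<le> k" using assms(2) p2 by simp
  have rp: "real p = 2 * real k" using p2 by simp
  have hkl: "k \<le> l" using assms(4) rp by simp
  have lpos: "0 < l" using hkl k2 by simp
  have "real l * (real p)^2 < real n"
    using assms(5) assms(2) by (simp add: pos_less_divide_eq)
  then have "real (4 * k * k * l) < real n" using rp by (simp add: power2_eq_square algebra_simps)
  then have hn: "4 * k * k * l < n" by linarith
  have kk: "4 \<le> k * k" using k2 mult_le_mono[OF k2 k2] by simp
  have h4: "4 * l \<le> k * k * l" using mult_le_mono1[OF kk] by simp
  have e4: "4 * k * k * l = 4 * (k * k * l)" "l * k * k = k * k * l" by (simp_all add: ac_simps)
  have hn2: "l * k * k + 3 * l < n" using hn h4 unfolding e4 by linarith
  define M where "M = min m k"
  define s0 where "s0 = k - (l - m)"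
  define L1 where "L1 = l - m"
  define L2 where "L2 = n - l - m"
  define a where "a s = (m choose s) * (L1 choose (k - s)) * (L2 choose (k - s))" for s
  have s0M: "s0 \<le> M" unfolding s0_def M_def using hkl assms(6) by auto
  have mu_eq: "real_of_int (mu n p l m) = (\<Sum>s=0..M. (-1)^s * real (a s))"
    unfolding mu_def a_def M_def L1_def L2_def k_def by (simp add: mult.assoc)
  have zero: "a s = 0" if "s < s0" for s
  proof -
    have "L1 < k - s" using that unfolding s0_def L1_def by arith
    then show ?thesis unfolding a_def by simp
  qed
  have "{0..M} = {0..<s0} \<union> {s0..M}" using s0M by auto
  then have "(\<Sum>s=0..M. (-1)^s * real (a s)) = (\<Sum>s\<in>{0..<s0}. (-1)^s * real (a s)) + (\<Sum>s=s0..M. (-1)^s * real (a s))"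
    by (simp add: sum.union_disjoint ivl_disj_int)
  also have "(\<Sum>s\<in>{0..<s0}. (-1)^s * real (a s)) = 0" using zero by simp
  finally have mu_eq2: "real_of_int (mu n p l m) = (\<Sum>s=s0..M. (-1)^s * real (a s))" using mu_eq by simp
  have dec: "a (Suc s) \<le> a s" if s: "s0 \<le> s" "s < M" for s
  proof -
    have sk: "s < k" "s < m" using s M_def by auto
    have e1: "(m choose Suc s) * Suc s = (m choose s) * (m - s)" by (rule choose_step)
    have kse: "k - s = Suc (k - Suc s)" using sk by simp
    have e2: "(L1 choose (k - s)) * (k - s) = (L1 choose (k - Suc s)) * (L1 - (k - Suc s))"
      using choose_step[of L1 "k - Suc s"] kse by simp
    have e3: "(L2 choose (k - s)) * (k - s) = (L2 choose (k - Suc s)) * (L2 - (k - Suc s))"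
      using choose_step[of L2 "k - Suc s"] kse by simp
    define X where "X = Suc s * (L1 - (k - Suc s)) * (L2 - (k - Suc s))"
    define Y where "Y = (m - s) * (k - s) * (k - s)"
    have eq: "a (Suc s) * X = a s * Y"
    proof -
      have "a (Suc s) * X = ((m choose Suc s) * Suc s) * ((L1 choose (k - Suc s)) * (L1 - (k - Suc s))) * ((L2 choose (k - Suc s)) * (L2 - (k - Suc s)))"
        unfolding a_def X_def by (simp only: mult_ac)
      also have "\<dots> = ((m choose s) * (m - s)) * ((L1 choose (k - s)) * (k - s)) * ((L2 choose (k - s)) * (k - s))"
        using e1 e2 e3 by simp
      also have "\<dots> = a s * Y" unfolding a_def Y_def by (simp only: mult_ac)
      finally show ?thesis .
    qed
    have x1: "1 \<le> L1 - (k - Suc s)" using s(1) sk unfolding s0_def L1_def by auto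
    have mk: "m * k * k \<le> l * k * k" using assms(6) by simp
    have kk2: "(k - s) * (k - s) \<le> k * k" using mult_le_mono[of "k - s" k "k - s" k] by simp
    have "Y \<le> m * (k * k)" unfolding Y_def
      using mult_le_mono[of "m - s" m "(k - s) * (k - s)" "k * k"] kk2 by (simp add: mult.assoc)
    also have "\<dots> \<le> l * k * k" using mk by (simp add: mult.assoc)
    also have "l * k * k \<le> L2 - (k - Suc s)" unfolding L2_def using hn2 hkl assms(6) by arith
    finally have "Y \<le> L2 - (k - Suc s)" .
    also have "L2 - (k - Suc s) \<le> X" unfolding X_def
      using x1 mult_le_mono[of 1 "Suc s * (L1 - (k - Suc s))" "L2 - (k - Suc s)" "L2 - (k - Suc s)"]
        mult_le_mono[of 1 "Suc s" 1 "L1 - (k - Suc s)"] by simp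
    finally have YX: "Y \<le> X" .
    have Xpos: "0 < X" unfolding X_def L2_def using x1 hn2 hkl assms(6) sk by auto
    have "a (Suc s) * X \<le> a s * X" using eq YX by (simp add: mult_le_mono2)
    then show ?thesis using Xpos by simp
  qed
  have absb: "\<bar>real_of_int (mu n p l m)\<bar> \<le> real (a s0)"
    unfolding mu_eq2 by (rule alt_bound_abs) (use s0M dec in auto)
  have mu0: "real_of_int (mu n p l 0) = real (l choose k) * real ((n - l) choose k)"
    unfolding mu_def k_def by simp
  have c1: "0 < (l choose k)" using hkl by simp
  have c2: "0 < ((n - l) choose k)" using hn2 hkl by simp
  have mu0pos: "0 < real_of_int (mu n p l 0)" unfolding mu0 using c1 c2 by simp
  have main: "real (a s0) \<le> max ((1 - real m / real l) ^ (p div 2)) (real p / real n) * real_of_int (mu n p l 0)"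
  proof (cases "k \<le> l - m")
    case True
    then have s00: "s0 = 0" unfolding s0_def by simp
    have "real (L1 choose k) \<le> (real L1 / real l)^k * real (l choose k)"
      by (rule choose_ratio) (use lpos L1_def in auto)
    moreover have "real L1 / real l = 1 - real m / real l" using lpos assms(6) L1_def
      by (simp add: field_simps of_nat_diff)
    moreover have "real (L2 choose k) \<le> real ((n - l) choose k)"
      unfolding L2_def by (simp add: binomial_right_mono)
    ultimately have "real (a s0) \<le> (1 - real m / real l)^k * real (l choose k) * real ((n - l) choose k)"
      unfolding s00 a_def by (simp add: mult_mono)
    also have "\<dots> \<le> max ((1 - real m / real l) ^ (p div 2)) (real p / real n) * real (l choose k) * real ((n - l) choose k)"
      using k_def by (intro mult_right_mono) auto
    finally show ?thesis unfolding mu0 by (simp add: mult.assoc)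
  next
    case False
    define j where "j = l - m"
    have ks0: "k - s0 = j" "s0 + j = k" "m + j = l" using False assms(6) unfolding s0_def j_def by auto
    have jk: "j \<le> k - 1" using False j_def by simp
    define N where "N = n - l"
    have A1: "(m choose s0) \<le> (l choose k)" using choose_shift[of m s0 j] ks0 by simp
    have A2: "(L2 choose j) \<le> (N choose j)" unfolding L2_def N_def by (simp add: binomial_right_mono)
    have A3: "(N choose j) \<le> (N choose (k - 1))" using jk hn2 hkl unfolding N_def
      by (intro binomial_mono) auto
    have A4: "(N choose (k - 1)) * (N - (k - 1)) = (N choose k) * k"
      using choose_step[of N "k - 1"] k2 by simp
    have h4': "4 * l \<le> l * k * k" using h4 e4 by simp
    have A5: "n \<le> 2 * (N - (k - 1))" unfolding N_def using hn2 hkl h4' by arith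
    have "a s0 = (m choose s0) * (L2 choose j)" unfolding a_def using ks0 L1_def j_def by simp
    also have "\<dots> \<le> (l choose k) * (N choose (k - 1))" using A1 A2 A3 by (simp add: mult_le_mono)
    finally have B: "a s0 * n \<le> (l choose k) * (N choose (k - 1)) * n" by simp
    also have "\<dots> \<le> (l choose k) * ((N choose (k - 1)) * (2 * (N - (k - 1))))" using A5 by simp
    also have "\<dots> = (l choose k) * 2 * ((N choose (k - 1)) * (N - (k - 1)))" by (simp only: mult_ac)
    also have "\<dots> = (l choose k) * 2 * ((N choose k) * k)" by (simp only: A4)
    also have "\<dots> = (l choose k) * (N choose k) * p" unfolding p2 by (simp only: mult_ac)
    finally have "real (a s0) * real n \<le> real (l choose k) * real (N choose k) * real p"
      by (metis of_nat_le_iff of_nat_mult)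
    moreover have npos: "0 < real n" using hn2 by simp
    ultimately have "real (a s0) \<le> real p / real n * (real (l choose k) * real (N choose k))"
      by (simp add: field_simps)
    also have "\<dots> \<le> max ((1 - real m / real l) ^ (p div 2)) (real p / real n) * (real (l choose k) * real (N choose k))"
      by (intro mult_right_mono) auto
    finally show ?thesis unfolding mu0 N_def by simp
  qed
  show ?thesis using absb main mu0pos by (simp add: divide_le_eq)
qed

end
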